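(* Let $\mathbf{D}$ be a dagger kernel category. Then its dagger Karoubi envelope $\mathrm{Kar}_\dagger(\mathbf{D})$ is again a dagger kernel category. Explicitly, a zero object is $(0,\mathrm{id}_0)$, and for a morphism $f:(X,s)\to(Y,t)$ of $\mathrm{Kar}_\dagger(\mathbf{D})$, if $k:K\to X$ is the dagger kernel of $f$ in $\mathbf{D}$ and $s'=k^\dagger\circ s\circ k$ (the unique map with $k\circ s'=s\circ k$), then $s'$ is a self-adjoint idempotent on $K$ and $s\circ k:(K,s')\to(X,s)$ is a dagger kernel of $f$ in $\mathrm{Kar}_\dagger(\mathbf{D})$. Moreover the embedding $\mathcal{I}:\mathbf{D}\to\mathrm{Kar}_\dagger(\mathbf{D})$, $X\mapsto(X,\mathrm{id}_X)$, $f\mapsto f$, preserves the dagger, the zero object and kernels.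
   Context: A dagger category is a category $\mathbf{D}$ with a contravariant functor $\dagger$ that is the identity on objects and satisfies $f^{\dagger\dagger}=f$. A dagger mono is a morphism $k$ with $k^\dagger\circ k=\mathrm{id}$. A dagger kernel category is a dagger category with a zero object $0$ (yielding zero morphisms $X\to 0\to Y$) in which every morphism has a kernel that is a dagger mono. A self-adjoint idempotent is an endomorphism $s$ with $s^\dagger=s=s\circ s$. The dagger Karoubi envelope $\mathrm{Kar}_\dagger(\mathbf{D})$ has as objects pairs $(X,s)$ with $s$ a self-adjoint idempotent on $X$; a morphism $(X,s)\to(Y,t)$ is a morphism $f:X\to Y$ of $\mathbf{D}$ with $f\circ s=f=t\circ f$; composition is as in $\mathbf{D}$, the identity on $(X,s)$ is $s$, and the dagger is that of $\mathbf{D}$. *)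

theory Defs
  imports Main
begin

text \<open>A (small-free, set-based) category with a dagger. Composition convention:
  cmp C g f is g after f, meaningful when cod f = dom g.\<close>

record ('o, 'm) dcat =
  Obj :: "'o set"
  Arr :: "'m set"
  dm  :: "'m \<Rightarrow> 'o"
  cd  :: "'m \<Rightarrow> 'o"
  cmp :: "'m \<Rightarrow> 'm \<Rightarrow> 'm"
  idt :: "'o \<Rightarrow> 'm"
  dag :: "'m \<Rightarrow> 'm"

definition hom :: "('o, 'm) dcat \<Rightarrow> 'o \<Rightarrow> 'o \<Rightarrow> 'm set" where
  "hom C X Y = {f \<in> Arr C. dm C f = X \<and> cd C f = Y}"

definition is_category :: "('o, 'm) dcat \<Rightarrow> bool" where
  "is_category C \<longleftrightarrow>
     (\<forall>f\<in>Arr C. dm C f \<in> Obj C \<and> cd C f \<in> Obj C) \<and>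
     (\<forall>X\<in>Obj C. idt C X \<in> hom C X X) \<and>
     (\<forall>f\<in>Arr C. \<forall>g\<in>Arr C. cd C f = dm C g \<longrightarrow> cmp C g f \<in> hom C (dm C f) (cd C g)) \<and>
     (\<forall>f\<in>Arr C. cmp C f (idt C (dm C f)) = f \<and> cmp C (idt C (cd C f)) f = f) \<and>
     (\<forall>f\<in>Arr C. \<forall>g\<in>Arr C. \<forall>h\<in>Arr C. cd C f = dm C g \<and> cd C g = dm C h \<longrightarrow>
         cmp C h (cmp C g f) = cmp C (cmp C h g) f)"

definition is_dagger_category :: "('o, 'm) dcat \<Rightarrow> bool" where
  "is_dagger_category C \<longleftrightarrow> is_category C \<and>
     (\<forall>f\<in>Arr C. dag C f \<in> hom C (cd C f) (dm C f) \<and> dag C (dag C f) = f) \<and>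
     (\<forall>X\<in>Obj C. dag C (idt C X) = idt C X) \<and>
     (\<forall>f\<in>Arr C. \<forall>g\<in>Arr C. cd C f = dm C g \<longrightarrow>
         dag C (cmp C g f) = cmp C (dag C f) (dag C g))"

definition is_zero_obj :: "('o, 'm) dcat \<Rightarrow> 'o \<Rightarrow> bool" where
  "is_zero_obj C z \<longleftrightarrow> z \<in> Obj C \<and>
     (\<forall>X\<in>Obj C. (\<exists>!f. f \<in> hom C X z) \<and> (\<exists>!f. f \<in> hom C z X))"

definition is_zero_mor :: "('o, 'm) dcat \<Rightarrow> 'm \<Rightarrow> bool" where
  "is_zero_mor C g \<longleftrightarrow> g \<in> Arr C \<and> (\<exists>z a b. is_zero_obj C z \<and>
      a \<in> hom C (dm C g) z \<and> b \<in> hom C z (cd C g) \<and> g = cmp C b a)"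

definition is_kernel :: "('o, 'm) dcat \<Rightarrow> 'm \<Rightarrow> 'm \<Rightarrow> bool" where
  "is_kernel C f k \<longleftrightarrow> f \<in> Arr C \<and> k \<in> Arr C \<and> cd C k = dm C f \<and>
     is_zero_mor C (cmp C f k) \<and>
     (\<forall>g\<in>Arr C. cd C g = dm C f \<and> is_zero_mor C (cmp C f g) \<longrightarrow>
        (\<exists>!h. h \<in> hom C (dm C g) (dm C k) \<and> cmp C k h = g))"

definition dagger_mono :: "('o, 'm) dcat \<Rightarrow> 'm \<Rightarrow> bool" where
  "dagger_mono C k \<longleftrightarrow> k \<in> Arr C \<and> cmp C (dag C k) k = idt C (dm C k)"

definition is_dagger_kernel_category :: "('o, 'm) dcat \<Rightarrow> bool" where
  "is_dagger_kernel_category C \<longleftrightarrow> is_dagger_category C \<and>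
     (\<exists>z. is_zero_obj C z) \<and>
     (\<forall>f\<in>Arr C. \<exists>k. is_kernel C f k \<and> dagger_mono C k)"

definition sa_idem :: "('o, 'm) dcat \<Rightarrow> 'o \<Rightarrow> 'm \<Rightarrow> bool" where
  "sa_idem C X s \<longleftrightarrow> s \<in> hom C X X \<and> dag C s = s \<and> cmp C s s = s"

text \<open>Dagger Karoubi envelope. Objects are pairs (X,s); a morphism is recorded
  together with its source and target objects as a triple (A, B, f).\<close>
definition Kar :: "('o, 'm) dcat \<Rightarrow> ('o \<times> 'm, ('o \<times> 'm) \<times> ('o \<times> 'm) \<times> 'm) dcat" where
  "Kar C = \<lparr> Obj = {(X, s). X \<in> Obj C \<and> sa_idem C X s},
     Arr = {((X, s), (Y, t), f). X \<in> Obj C \<and> sa_idem C X s \<and> Y \<in> Obj C \<and> sa_idem C Y t \<and>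
              f \<in> hom C X Y \<and> cmp C f s = f \<and> cmp C t f = f},
     dm = (\<lambda>(A, B, f). A),
     cd = (\<lambda>(A, B, f). B),
     cmp = (\<lambda>(B', C', g) (A, B, f). (A, C', cmp C g f)),
     idt = (\<lambda>(X, s). ((X, s), (X, s), s)),
     dag = (\<lambda>(A, B, f). (B, A, dag C f)) \<rparr>"

definition Iobj :: "('o, 'm) dcat \<Rightarrow> 'o \<Rightarrow> 'o \<times> 'm" where
  "Iobj C X = (X, idt C X)"

definition Iarr :: "('o, 'm) dcat \<Rightarrow> 'm \<Rightarrow> ('o \<times> 'm) \<times> ('o \<times> 'm) \<times> 'm" where
  "Iarr C f = (Iobj C (dm C f), Iobj C (cd C f), f)"

end

theory Submission imports Defs begin

locale dkc = fixes D :: "('o,'m) dcat" assumes dk: "is_dagger_kernel_category D"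
begin

lemma cat: "is_category D" and dc: "is_dagger_category D"
  using dk unfolding is_dagger_kernel_category_def is_dagger_category_def by auto

lemma arr_obj: "f \<in> Arr D \<Longrightarrow> dm D f \<in> Obj D" "f \<in> Arr D \<Longrightarrow> cd D f \<in> Obj D"
  using cat unfolding is_category_def by auto

lemma id_arr[simp]: "X \<in> Obj D \<Longrightarrow> idt D X \<in> Arr D" "X \<in> Obj D \<Longrightarrow> dm D (idt D X) = X"
  "X \<in> Obj D \<Longrightarrow> cd D (idt D X) = X"
  using cat unfolding is_category_def hom_def by auto

lemma comp_arr[simp]: "f \<in> Arr D \<Longrightarrow> g \<in> Arr D \<Longrightarrow> cd D f = dm D g \<Longrightarrow> cmp D g f \<in> Arr D"
  "f \<in> Arr D \<Longrightarrow> g \<in> Arr D \<Longrightarrow> cd D f = dm D g \<Longrightarrow> dm D (cmp D g f) = dm D f"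
  "f \<in> Arr D \<Longrightarrow> g \<in> Arr D \<Longrightarrow> cd D f = dm D g \<Longrightarrow> cd D (cmp D g f) = cd D g"
  using cat unfolding is_category_def hom_def by auto

lemma id_r: "f \<in> Arr D \<Longrightarrow> cmp D f (idt D (dm D f)) = f"
  and id_l: "f \<in> Arr D \<Longrightarrow> cmp D (idt D (cd D f)) f = f"
  using cat unfolding is_category_def by auto

lemma assoc: "f \<in> Arr D \<Longrightarrow> g \<in> Arr D \<Longrightarrow> h \<in> Arr D \<Longrightarrow> cd D f = dm D g \<Longrightarrow> cd D g = dm D h \<Longrightarrow>
   cmp D h (cmp D g f) = cmp D (cmp D h g) f"
  using cat unfolding is_category_def by blast

lemma dag_arr[simp]: "f \<in> Arr D \<Longrightarrow> dag D f \<in> Arr D" "f \<in> Arr D \<Longrightarrow> dm D (dag D f) = cd D f"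
  "f \<in> Arr D \<Longrightarrow> cd D (dag D f) = dm D f" "f \<in> Arr D \<Longrightarrow> dag D (dag D f) = f"
  using dc unfolding is_dagger_category_def hom_def by auto

lemma dag_id[simp]: "X \<in> Obj D \<Longrightarrow> dag D (idt D X) = idt D X"
  using dc unfolding is_dagger_category_def by auto

lemma dag_comp: "f \<in> Arr D \<Longrightarrow> g \<in> Arr D \<Longrightarrow> cd D f = dm D g \<Longrightarrow>
   dag D (cmp D g f) = cmp D (dag D f) (dag D g)"
  using dc unfolding is_dagger_category_def by auto

lemma hom_iff[simp]: "f \<in> hom D X Y \<longleftrightarrow> f \<in> Arr D \<and> dm D f = X \<and> cd D f = Y"
  by (simp add: hom_def)

definition z0 where "z0 = (SOME z. is_zero_obj D z)"

lemma z0: "is_zero_obj D z0"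
  using dk unfolding is_dagger_kernel_category_def z0_def by (metis someI_ex)

lemma z0_obj[simp]: "z0 \<in> Obj D" using z0 unfolding is_zero_obj_def by auto

definition za where "za X = (THE f. f \<in> hom D X z0)"
definition zb where "zb Y = (THE f. f \<in> hom D z0 Y)"

lemma za: "X \<in> Obj D \<Longrightarrow> za X \<in> Arr D \<and> dm D (za X) = X \<and> cd D (za X) = z0"
  and za_uniq: "X \<in> Obj D \<Longrightarrow> f \<in> hom D X z0 \<Longrightarrow> f = za X"
proof -
  assume X: "X \<in> Obj D"
  then have "\<exists>!f. f \<in> hom D X z0" using z0 unfolding is_zero_obj_def by blast
  then show "za X \<in> Arr D \<and> dm D (za X) = X \<and> cd D (za X) = z0"
    "f \<in> hom D X z0 \<Longrightarrow> f = za X"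
    unfolding za_def by (metis (no_types, lifting) hom_iff theI)+
qed

lemma zb: "Y \<in> Obj D \<Longrightarrow> zb Y \<in> Arr D \<and> dm D (zb Y) = z0 \<and> cd D (zb Y) = Y"
  and zb_uniq: "Y \<in> Obj D \<Longrightarrow> f \<in> hom D z0 Y \<Longrightarrow> f = zb Y"
proof -
  assume X: "Y \<in> Obj D"
  then have "\<exists>!f. f \<in> hom D z0 Y" using z0 unfolding is_zero_obj_def by blast
  then show "zb Y \<in> Arr D \<and> dm D (zb Y) = z0 \<and> cd D (zb Y) = Y"
    "f \<in> hom D z0 Y \<Longrightarrow> f = zb Y"
    unfolding zb_def by (metis (no_types, lifting) hom_iff theI)+
qed

definition zm where "zm X Y = cmp D (zb Y) (za X)"

lemma zm_arr[simp]: "X \<in> Obj D \<Longrightarrow> Y \<in> Obj D \<Longrightarrow> zm X Y \<in> Arr D"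
  "X \<in> Obj D \<Longrightarrow> Y \<in> Obj D \<Longrightarrow> dm D (zm X Y) = X"
  "X \<in> Obj D \<Longrightarrow> Y \<in> Obj D \<Longrightarrow> cd D (zm X Y) = Y"
  unfolding zm_def using za zb by auto

lemma zero_mor_iff: "is_zero_mor D g \<longleftrightarrow> g \<in> Arr D \<and> g = zm (dm D g) (cd D g)"
proof
  assume "is_zero_mor D g"
  then obtain z a b where z: "is_zero_obj D z" and a: "a \<in> hom D (dm D g) z" and b: "b \<in> hom D z (cd D g)"
    and g: "g = cmp D b a" and gA: "g \<in> Arr D" unfolding is_zero_mor_def by blast
  have zO: "z \<in> Obj D" using z unfolding is_zero_obj_def by auto
  obtain i where i: "i \<in> hom D z z0" using z0 zO unfolding is_zero_obj_def by blast
  obtain j where j: "j \<in> hom D z0 z" using z0 zO unfolding is_zero_obj_def by blast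
  have ji: "cmp D j i = idt D z"
    using z zO i j unfolding is_zero_obj_def by (metis comp_arr hom_iff id_arr z0_obj)
  have XO: "dm D g \<in> Obj D" "cd D g \<in> Obj D" using gA arr_obj by auto
  have "g = cmp D b (cmp D (cmp D j i) a)" using ji g a b id_l[of a] by simp
  also have "\<dots> = cmp D (cmp D b j) (cmp D i a)" using a b i j by (simp add: assoc)
  also have "\<dots> = zm (dm D g) (cd D g)" unfolding zm_def
    using za_uniq[OF XO(1), of "cmp D i a"] zb_uniq[OF XO(2), of "cmp D b j"] a b i j by simp
  finally show "g \<in> Arr D \<and> g = zm (dm D g) (cd D g)" using gA by simp
next
  assume "g \<in> Arr D \<and> g = zm (dm D g) (cd D g)"
  then show "is_zero_mor D g" unfolding is_zero_mor_def zm_def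
    using z0 za zb arr_obj by (metis hom_iff)
qed

lemma zm_comp_r: "h \<in> Arr D \<Longrightarrow> cd D h = X \<Longrightarrow> Y \<in> Obj D \<Longrightarrow> cmp D (zm X Y) h = zm (dm D h) Y"
proof -
  assume h: "h \<in> Arr D" "cd D h = X" "Y \<in> Obj D"
  have XO: "X \<in> Obj D" "dm D h \<in> Obj D" using h arr_obj by auto
  have a: "za X \<in> Arr D" "dm D (za X) = X" "cd D (za X) = z0" using za XO by auto
  have b: "zb Y \<in> Arr D" "dm D (zb Y) = z0" "cd D (zb Y) = Y" using zb h by auto
  have "cmp D (za X) h = za (dm D h)" using za_uniq[OF XO(2), of "cmp D (za X) h"] a h by simp
  then show ?thesis unfolding zm_def using assoc[of h "za X" "zb Y"] a b h by simp
qed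

lemma zm_comp_l: "h \<in> Arr D \<Longrightarrow> dm D h = Y \<Longrightarrow> X \<in> Obj D \<Longrightarrow> cmp D h (zm X Y) = zm X (cd D h)"
proof -
  assume h: "h \<in> Arr D" "dm D h = Y" "X \<in> Obj D"
  have XO: "Y \<in> Obj D" "cd D h \<in> Obj D" using h arr_obj by auto
  have a: "za X \<in> Arr D" "dm D (za X) = X" "cd D (za X) = z0" using za h by auto
  have b: "zb Y \<in> Arr D" "dm D (zb Y) = z0" "cd D (zb Y) = Y" using zb XO by auto
  have "cmp D h (zb Y) = zb (cd D h)" using zb_uniq[OF XO(2), of "cmp D h (zb Y)"] b h by simp
  then show ?thesis unfolding zm_def using assoc[of "za X" "zb Y" h] a b h by simp
qed

lemma sa_iff: "sa_idem D X s \<longleftrightarrow> s \<in> Arr D \<and> dm D s = X \<and> cd D s = X \<and> dag D s = s \<and> cmp D s s = s"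
  unfolding sa_idem_def by auto

lemma K_simps[simp]: "Obj (Kar D) = {(X, s). X \<in> Obj D \<and> sa_idem D X s}"
  "dm (Kar D) (A,B,f) = A" "cd (Kar D) (A,B,f) = B"
  "cmp (Kar D) (B',C',g) (A,B,f) = (A,C',cmp D g f)"
  "idt (Kar D) (X,s) = ((X,s),(X,s),s)"
  "dag (Kar D) (A,B,f) = (B,A,dag D f)"
  by (simp_all add: Kar_def)

lemma KA: "((X,s),(Y,t),f) \<in> Arr (Kar D) \<longleftrightarrow> X \<in> Obj D \<and> sa_idem D X s \<and> Y \<in> Obj D \<and> sa_idem D Y t \<and>
              f \<in> Arr D \<and> dm D f = X \<and> cd D f = Y \<and> cmp D f s = f \<and> cmp D t f = f"
  by (simp add: Kar_def)

lemma KA_cases: "x \<in> Arr (Kar D) \<Longrightarrow> \<exists>X s Y t f. x = ((X,s),(Y,t),f)"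
  by (cases x) auto

lemma kar_comp: assumes "((X,s),(Y,t),f) \<in> Arr (Kar D)" "((Y,t),(Z,u),g) \<in> Arr (Kar D)"
  shows "((X,s),(Z,u),cmp D g f) \<in> Arr (Kar D)"
proof -
  have f: "f \<in> Arr D" "dm D f = X" "cd D f = Y" "cmp D f s = f" "cmp D t f = f" "sa_idem D X s" "X \<in> Obj D"
    using assms(1) KA by auto
  have g: "g \<in> Arr D" "dm D g = Y" "cd D g = Z" "cmp D g t = g" "cmp D u g = g" "sa_idem D Z u" "Z \<in> Obj D"
    using assms(2) KA by auto
  have s: "s \<in> Arr D" "dm D s = X" "cd D s = X" using f sa_iff by auto
  have u: "u \<in> Arr D" "dm D u = Z" "cd D u = Z" using g sa_iff by auto
  have "cmp D (cmp D g f) s = cmp D g f" using assoc[of s f g] f g s by simp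
  moreover have "cmp D u (cmp D g f) = cmp D g f" using assoc[of f g u] f g u by simp
  ultimately show ?thesis using f g KA by auto
qed

lemma kar_dag: assumes "((X,s),(Y,t),f) \<in> Arr (Kar D)"
  shows "((Y,t),(X,s),dag D f) \<in> Arr (Kar D)"
proof -
  have f: "f \<in> Arr D" "dm D f = X" "cd D f = Y" "cmp D f s = f" "cmp D t f = f" "sa_idem D X s" "X \<in> Obj D"
     "sa_idem D Y t" "Y \<in> Obj D"
    using assms(1) KA by auto
  have s: "s \<in> Arr D" "dm D s = X" "cd D s = X" "dag D s = s" using f sa_iff by auto
  have t: "t \<in> Arr D" "dm D t = Y" "cd D t = Y" "dag D t = t" using f sa_iff by auto
  have "cmp D (dag D f) t = dag D f" using dag_comp[of f t] f t by simp
  moreover have "cmp D s (dag D f) = dag D f" using dag_comp[of s f] f s by simp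
  ultimately show ?thesis using f KA by auto
qed

lemma kar_id: "X \<in> Obj D \<Longrightarrow> sa_idem D X s \<Longrightarrow> ((X,s),(X,s),s) \<in> Arr (Kar D)"
  using KA sa_iff by auto

lemma kar_hom: "x \<in> hom (Kar D) A B \<longleftrightarrow> x \<in> Arr (Kar D) \<and> dm (Kar D) x = A \<and> cd (Kar D) x = B"
  by (simp add: hom_def)

lemma k1: "x \<in> Arr (Kar D) \<Longrightarrow> dm (Kar D) x \<in> Obj (Kar D) \<and> cd (Kar D) x \<in> Obj (Kar D)"
  and k2: "x \<in> Arr (Kar D) \<Longrightarrow> dag (Kar D) x \<in> hom (Kar D) (cd (Kar D) x) (dm (Kar D) x) \<and> dag (Kar D) (dag (Kar D) x) = x"
  and k3: "x \<in> Arr (Kar D) \<Longrightarrow> cmp (Kar D) x (idt (Kar D) (dm (Kar D) x)) = x \<and> cmp (Kar D) (idt (Kar D) (cd (Kar D) x)) x = x"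
proof -
  assume "x \<in> Arr (Kar D)"
  moreover obtain X s Y t f where x: "x = ((X,s),(Y,t),f)" using KA_cases calculation by blast
  ultimately have xa: "((X,s),(Y,t),f) \<in> Arr (Kar D)" by simp
  show "dm (Kar D) x \<in> Obj (Kar D) \<and> cd (Kar D) x \<in> Obj (Kar D)"
    using xa unfolding x KA by auto
  show "dag (Kar D) x \<in> hom (Kar D) (cd (Kar D) x) (dm (Kar D) x) \<and> dag (Kar D) (dag (Kar D) x) = x"
  proof -
    have "dag D (dag D f) = f" using xa KA by auto
    then show ?thesis using kar_dag[OF xa] unfolding x kar_hom by auto
  qed
  show "cmp (Kar D) x (idt (Kar D) (dm (Kar D) x)) = x \<and> cmp (Kar D) (idt (Kar D) (cd (Kar D) x)) x = x"
    using xa unfolding x KA by auto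
qed

lemma k4: "A \<in> Obj (Kar D) \<Longrightarrow> idt (Kar D) A \<in> hom (Kar D) A A \<and> dag (Kar D) (idt (Kar D) A) = idt (Kar D) A"
proof -
  assume "A \<in> Obj (Kar D)"
  then obtain X s where A: "A = (X,s)" "X \<in> Obj D" "sa_idem D X s" by auto
  then show ?thesis using kar_id A sa_iff unfolding kar_hom by auto
qed

lemma k5: "x \<in> Arr (Kar D) \<Longrightarrow> y \<in> Arr (Kar D) \<Longrightarrow> cd (Kar D) x = dm (Kar D) y \<Longrightarrow>
   cmp (Kar D) y x \<in> hom (Kar D) (dm (Kar D) x) (cd (Kar D) y) \<and>
   dag (Kar D) (cmp (Kar D) y x) = cmp (Kar D) (dag (Kar D) x) (dag (Kar D) y)"
proof -
  assume xy: "x \<in> Arr (Kar D)" "y \<in> Arr (Kar D)" "cd (Kar D) x = dm (Kar D) y"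
  then obtain X s Y t f Z u g where x: "x = ((X,s),(Y,t),f)" and y: "y = ((Y,t),(Z,u),g)"
    by (metis KA_cases K_simps(2,3))
  have xa: "((X,s),(Y,t),f) \<in> Arr (Kar D)" and ya: "((Y,t),(Z,u),g) \<in> Arr (Kar D)" using xy x y by auto
  have "dag D (cmp D g f) = cmp D (dag D f) (dag D g)" using xa ya dag_comp KA by auto
  then show ?thesis
    using kar_comp[OF xa ya] unfolding x y kar_hom by auto
qed

lemma k6: "x \<in> Arr (Kar D) \<Longrightarrow> y \<in> Arr (Kar D) \<Longrightarrow> z \<in> Arr (Kar D) \<Longrightarrow>
    cd (Kar D) x = dm (Kar D) y \<and> cd (Kar D) y = dm (Kar D) z \<Longrightarrow>
    cmp (Kar D) z (cmp (Kar D) y x) = cmp (Kar D) (cmp (Kar D) z y) x"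
proof -
  assume xyz: "x \<in> Arr (Kar D)" "y \<in> Arr (Kar D)" "z \<in> Arr (Kar D)"
    "cd (Kar D) x = dm (Kar D) y \<and> cd (Kar D) y = dm (Kar D) z"
  then obtain X s Y t f Z u g W v h where x: "x = ((X,s),(Y,t),f)" and y: "y = ((Y,t),(Z,u),g)"
    and z: "z = ((Z,u),(W,v),h)"
    by (metis KA_cases K_simps(2,3))
  show ?thesis
    using xyz assoc unfolding x y z KA by auto
qed

lemma kar_dcat: "is_dagger_category (Kar D)"
  unfolding is_dagger_category_def is_category_def
  using k1 k2 k3 k4 k5 k6 by blast

lemma zo_out: "is_zero_obj D z \<Longrightarrow> X \<in> Obj D \<Longrightarrow> f \<in> hom D X z \<Longrightarrow> g \<in> hom D X z \<Longrightarrow> f = g"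
  and zo_in: "is_zero_obj D z \<Longrightarrow> X \<in> Obj D \<Longrightarrow> f \<in> hom D z X \<Longrightarrow> g \<in> hom D z X \<Longrightarrow> f = g"
  and zo_out_ex: "is_zero_obj D z \<Longrightarrow> X \<in> Obj D \<Longrightarrow> \<exists>f. f \<in> hom D X z"
  and zo_in_ex: "is_zero_obj D z \<Longrightarrow> X \<in> Obj D \<Longrightarrow> \<exists>f. f \<in> hom D z X"
  unfolding is_zero_obj_def by blast+

lemma kz: assumes z: "is_zero_obj D z" shows "is_zero_obj (Kar D) (z, idt D z)"
proof -
  have zO: "z \<in> Obj D" using z unfolding is_zero_obj_def by auto
  have zs: "sa_idem D z (idt D z)" using zO sa_iff id_r[of "idt D z"] by simp
  have out: "\<exists>!x. x \<in> hom (Kar D) (X,s) (z, idt D z)" if X: "X \<in> Obj D" "sa_idem D X s" for X s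
  proof -
    obtain a where a: "a \<in> hom D X z" using zo_out_ex z X by blast
    have s: "s \<in> Arr D" "dm D s = X" "cd D s = X" using X sa_iff by auto
    have "cmp D a s = a" using zo_out[OF z X(1), of "cmp D a s" a] a s by simp
    moreover have "cmp D (idt D z) a = a" using a id_l[of a] by simp
    ultimately have "((X,s),(z,idt D z),a) \<in> hom (Kar D) (X,s) (z, idt D z)"
      using a X zO zs unfolding kar_hom KA by simp
    moreover have "x = ((X,s),(z,idt D z),a)" if "x \<in> hom (Kar D) (X,s) (z, idt D z)" for x
    proof -
      obtain A B f where x: "x = (A,B,f)" by (cases x) auto
      then have "A = (X,s)" "B = (z,idt D z)" using that unfolding kar_hom by auto
      then have "((X,s),(z,idt D z),f) \<in> Arr (Kar D)" using that x unfolding kar_hom by auto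
      then have "f = a" using zo_out[OF z X(1), of f a] a unfolding KA by auto
      then show ?thesis using x \<open>A = (X,s)\<close> \<open>B = _\<close> by simp
    qed
    ultimately show ?thesis by blast
  qed
  have inn: "\<exists>!x. x \<in> hom (Kar D) (z, idt D z) (X,s)" if X: "X \<in> Obj D" "sa_idem D X s" for X s
  proof -
    obtain a where a: "a \<in> hom D z X" using zo_in_ex z X by blast
    have s: "s \<in> Arr D" "dm D s = X" "cd D s = X" using X sa_iff by auto
    have "cmp D s a = a" using zo_in[OF z X(1), of "cmp D s a" a] a s by simp
    moreover have "cmp D a (idt D z) = a" using a id_r[of a] by simp
    ultimately have "((z,idt D z),(X,s),a) \<in> hom (Kar D) (z, idt D z) (X,s)"
      using a X zO zs unfolding kar_hom KA by simp
    moreover have "x = ((z,idt D z),(X,s),a)" if "x \<in> hom (Kar D) (z, idt D z) (X,s)" for x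
    proof -
      obtain A B f where x: "x = (A,B,f)" by (cases x) auto
      then have "B = (X,s)" "A = (z,idt D z)" using that unfolding kar_hom by auto
      then have "((z,idt D z),(X,s),f) \<in> Arr (Kar D)" using that x unfolding kar_hom by auto
      then have "f = a" using zo_in[OF z X(1), of f a] a unfolding KA by auto
      then show ?thesis using x \<open>A = _\<close> \<open>B = _\<close> by simp
    qed
    ultimately show ?thesis by blast
  qed
  show ?thesis unfolding is_zero_obj_def using out inn zO zs by auto
qed

lemma kar_zero_mor: assumes g: "((X,s),(Y,t),f) \<in> Arr (Kar D)"
  shows "is_zero_mor (Kar D) ((X,s),(Y,t),f) \<longleftrightarrow> is_zero_mor D f"
proof
  have gi: "X \<in> Obj D" "sa_idem D X s" "Y \<in> Obj D" "sa_idem D Y t" "f \<in> Arr D" "dm D f = X" "cd D f = Y"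
    "cmp D f s = f" "cmp D t f = f" using g KA by auto
  have s: "s \<in> Arr D" "dm D s = X" "cd D s = X" using gi sa_iff by auto
  have t: "t \<in> Arr D" "dm D t = Y" "cd D t = Y" using gi sa_iff by auto
  {
    assume "is_zero_mor D f"
    then have f: "f = zm X Y" using zero_mor_iff gi by auto
    have a: "za X \<in> Arr D" "dm D (za X) = X" "cd D (za X) = z0" using za gi by auto
    have b: "zb Y \<in> Arr D" "dm D (zb Y) = z0" "cd D (zb Y) = Y" using zb gi by auto
    have zs: "sa_idem D z0 (idt D z0)" using sa_iff id_r[of "idt D z0"] by simp
    have "cmp D (za X) s = za X" using za_uniq[OF gi(1), of "cmp D (za X) s"] a s by simp
    moreover have "cmp D (idt D z0) (za X) = za X" using a id_l[of "za X"] by simp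
    ultimately have aK: "((X,s),(z0,idt D z0),za X) \<in> hom (Kar D) (X,s) (z0, idt D z0)"
      using a gi zs unfolding kar_hom KA by simp
    have "cmp D t (zb Y) = zb Y" using zb_uniq[OF gi(3), of "cmp D t (zb Y)"] b t by simp
    moreover have "cmp D (zb Y) (idt D z0) = zb Y" using b id_r[of "zb Y"] by simp
    ultimately have bK: "((z0,idt D z0),(Y,t),zb Y) \<in> hom (Kar D) (z0, idt D z0) (Y,t)"
      using b gi zs unfolding kar_hom KA by simp
    show "is_zero_mor (Kar D) ((X,s),(Y,t),f)"
      unfolding is_zero_mor_def
      apply (rule conjI[OF g])
      apply (rule exI[of _ "(z0, idt D z0)"], rule exI[of _ "((X,s),(z0,idt D z0),za X)"],
             rule exI[of _ "((z0,idt D z0),(Y,t),zb Y)"])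
      using kz[OF z0] aK bK f unfolding zm_def by simp
  }
  {
    assume "is_zero_mor (Kar D) ((X,s),(Y,t),f)"
    then obtain Zu a b where Zu: "is_zero_obj (Kar D) Zu" and a: "a \<in> hom (Kar D) (X,s) Zu"
      and b: "b \<in> hom (Kar D) Zu (Y,t)" and ab: "((X,s),(Y,t),f) = cmp (Kar D) b a"
      unfolding is_zero_mor_def by auto
    obtain Z u where Zu_eq: "Zu = (Z,u)" by (cases Zu) auto
    have ZO: "Z \<in> Obj D" "sa_idem D Z u" using Zu Zu_eq unfolding is_zero_obj_def by auto
    obtain aa where aa: "a = ((X,s),(Z,u),aa)" using a Zu_eq unfolding kar_hom by (cases a) auto
    obtain bb where bb: "b = ((Z,u),(Y,t),bb)" using b Zu_eq unfolding kar_hom by (cases b) auto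
    have aaA: "aa \<in> Arr D" "dm D aa = X" "cd D aa = Z" "cmp D u aa = aa"
      using a aa unfolding kar_hom by (auto simp: KA)
    have bbA: "bb \<in> Arr D" "dm D bb = Z" "cd D bb = Y"
      using b bb unfolding kar_hom by (auto simp: KA)
    have fab: "f = cmp D bb aa" using ab aa bb by simp
    have zK: "is_zero_obj (Kar D) (z0, idt D z0)" using kz z0 by blast
    have ZK: "(Z,u) \<in> Obj (Kar D)" using ZO by simp
    obtain p where p: "p \<in> hom (Kar D) (Z,u) (z0, idt D z0)" using zK ZK unfolding is_zero_obj_def by blast
    obtain q where q: "q \<in> hom (Kar D) (z0, idt D z0) (Z,u)" using zK ZK unfolding is_zero_obj_def by blast
    obtain pp where pp: "p = ((Z,u),(z0,idt D z0),pp)" using p unfolding kar_hom by (cases p) auto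
    obtain qq where qq: "q = ((z0,idt D z0),(Z,u),qq)" using q unfolding kar_hom by (cases q) auto
    have ppA: "pp \<in> hom D Z z0" using p pp unfolding kar_hom by (auto simp: KA)
    have qqA: "qq \<in> hom D z0 Z" using q qq unfolding kar_hom by (auto simp: KA)
    have "cmp (Kar D) q p \<in> hom (Kar D) (Z,u) (Z,u)" using k5[of p q] p q unfolding kar_hom by auto
    moreover have "idt (Kar D) (Z,u) \<in> hom (Kar D) (Z,u) (Z,u)" using k4 ZK by blast
    ultimately have "cmp (Kar D) q p = idt (Kar D) (Z,u)"
      using Zu ZK Zu_eq unfolding is_zero_obj_def by blast
    then have "u = cmp D qq pp" using pp qq by simp
    also have "\<dots> = zm Z Z" unfolding zm_def using za_uniq[OF ZO(1) ppA] zb_uniq[OF ZO(1) qqA] by simp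
    finally have u: "u = zm Z Z" .
    have "f = cmp D bb (cmp D u aa)" using fab aaA by simp
    also have "\<dots> = zm X Y" using u zm_comp_r[of aa Z Z] zm_comp_l[of bb Z X] aaA bbA ZO gi by simp
    finally
    show "is_zero_mor D f" using zero_mor_iff gi by simp
  }
qed

lemma kar_kernel:
  assumes F: "((X,s),(Y,t),f) \<in> Arr (Kar D)" and ker: "is_kernel D f k" and dmk: "dagger_mono D k"
  defines "s' \<equiv> cmp D (dag D k) (cmp D s k)"
  shows "sa_idem D (dm D k) s'
          \<and> cmp D k s' = cmp D s k
          \<and> (\<forall>u \<in> hom D (dm D k) (dm D k). cmp D k u = cmp D s k \<longrightarrow> u = s')
          \<and> ((dm D k, s'), (X, s), cmp D s k) \<in> Arr (Kar D)
          \<and> is_kernel (Kar D) ((X, s), (Y, t), f) ((dm D k, s'), (X, s), cmp D s k)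
          \<and> dagger_mono (Kar D) ((dm D k, s'), (X, s), cmp D s k)"
proof -
  define K where "K = dm D k"
  have gi: "X \<in> Obj D" "sa_idem D X s" "Y \<in> Obj D" "sa_idem D Y t" "f \<in> Arr D" "dm D f = X" "cd D f = Y"
    "cmp D f s = f" "cmp D t f = f" using F KA by auto
  have s: "s \<in> Arr D" "dm D s = X" "cd D s = X" "dag D s = s" "cmp D s s = s" using gi sa_iff by auto
  have k: "k \<in> Arr D" "cd D k = X" "dm D k = K" "K \<in> Obj D"
    using ker gi arr_obj unfolding is_kernel_def K_def by auto
  have kk: "cmp D (dag D k) k = idt D K" using dmk unfolding dagger_mono_def K_def by auto
  have fk0: "is_zero_mor D (cmp D f k)" using ker unfolding is_kernel_def by auto
  have univ: "\<And>g. g \<in> Arr D \<Longrightarrow> cd D g = X \<Longrightarrow> is_zero_mor D (cmp D f g) \<Longrightarrow>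
        \<exists>!h. h \<in> hom D (dm D g) K \<and> cmp D k h = g"
    using ker gi unfolding is_kernel_def K_def by auto
  note ty = s(1-4) k(1-3) gi(5-7)
  have cancel: "cmp D (dag D k) (cmp D k h) = h" if "h \<in> Arr D" "cd D h = K" for h
  proof -
    have "cmp D (dag D k) (cmp D k h) = cmp D (cmp D (dag D k) k) h" using ty that by (simp add: assoc)
    also have "\<dots> = h" using kk that id_l[of h] by simp
    finally show ?thesis .
  qed
  have fsk: "cmp D f (cmp D s k) = cmp D f k"
  proof -
    have "cmp D f (cmp D s k) = cmp D (cmp D f s) k" using ty by (simp add: assoc)
    then show ?thesis using gi by simp
  qed
  have sk: "cmp D s k \<in> Arr D" "dm D (cmp D s k) = K" "cd D (cmp D s k) = X" using ty by auto
  obtain h where h: "h \<in> hom D K K" "cmp D k h = cmp D s k"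
    using univ[OF sk(1) sk(3)] fsk fk0 sk by auto
  have hs': "h = s'" unfolding s'_def using h cancel[of h] by simp
  have ks': "cmp D k s' = cmp D s k" using h hs' by simp
  have s'A: "s' \<in> Arr D" "dm D s' = K" "cd D s' = K" using h hs' by auto
  have dag_s': "dag D s' = s'"
  proof -
    have "dag D s' = cmp D (dag D (cmp D s k)) k" unfolding s'_def using ty by (simp add: dag_comp)
    also have "\<dots> = cmp D (cmp D (dag D k) s) k" using ty by (simp add: dag_comp)
    also have "\<dots> = s'" unfolding s'_def using ty by (simp add: assoc)
    finally show ?thesis .
  qed
  have sss: "cmp D s (cmp D s k) = cmp D s k"
  proof -
    have "cmp D s (cmp D s k) = cmp D (cmp D s s) k" using ty by (simp add: assoc)
    then show ?thesis using s by simp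
  qed
  have s's': "cmp D s' s' = s'"
  proof -
    have "cmp D s' s' = cmp D (dag D k) (cmp D (cmp D s k) s')" unfolding s'_def using ty by (simp add: assoc)
    also have "\<dots> = cmp D (dag D k) (cmp D s (cmp D k s'))" using ty s'A by (simp add: assoc)
    also have "\<dots> = s'" using ks' sss s'_def by simp
    finally show ?thesis .
  qed
  have sa': "sa_idem D K s'" using sa_iff s'A dag_s' s's' by auto
  have uniq: "\<forall>u \<in> hom D K K. cmp D k u = cmp D s k \<longrightarrow> u = s'"
  proof (intro ballI impI)
    fix u assume "u \<in> hom D K K" "cmp D k u = cmp D s k"
    then show "u = s'" unfolding s'_def using cancel[of u] by auto
  qed
  have sks': "cmp D (cmp D s k) s' = cmp D s k"
  proof -
    have "cmp D (cmp D s k) s' = cmp D s (cmp D k s')" using ty s'A by (simp add: assoc)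
    then show ?thesis using ks' sss by simp
  qed
  have KkA: "((K, s'), (X, s), cmp D s k) \<in> Arr (Kar D)"
    using KA k sa' gi sk sks' sss by auto
  have FK: "cmp (Kar D) ((X, s), (Y, t), f) ((K, s'), (X, s), cmp D s k) \<in> Arr (Kar D)"
    using kar_comp[OF KkA F] by simp
  have FK0: "is_zero_mor (Kar D) (cmp (Kar D) ((X, s), (Y, t), f) ((K, s'), (X, s), cmp D s k))"
    using kar_zero_mor[of K s' Y t "cmp D f (cmp D s k)"] FK fsk fk0 by simp
  have kuniv: "\<exists>!H. H \<in> hom (Kar D) (dm (Kar D) G) (dm (Kar D) ((K, s'), (X, s), cmp D s k)) \<and>
            cmp (Kar D) ((K, s'), (X, s), cmp D s k) H = G"
    if G: "G \<in> Arr (Kar D)" "cd (Kar D) G = dm (Kar D) ((X, s), (Y, t), f)"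
       "is_zero_mor (Kar D) (cmp (Kar D) ((X, s), (Y, t), f) G)" for G
  proof -
    obtain A a gg where Ge: "G = ((A,a),(X,s),gg)" using G by (metis KA_cases K_simps(2,3) prod.inject)
    have GA: "((A,a),(X,s),gg) \<in> Arr (Kar D)" using G Ge by simp
    have gg: "gg \<in> Arr D" "dm D gg = A" "cd D gg = X" "cmp D gg a = gg" "cmp D s gg = gg"
      "A \<in> Obj D" "sa_idem D A a" using GA KA by auto
    have a: "a \<in> Arr D" "dm D a = A" "cd D a = A" using gg sa_iff by auto
    have FG: "((A,a),(Y,t),cmp D f gg) \<in> Arr (Kar D)" using kar_comp[OF GA F] .
    have "is_zero_mor D (cmp D f gg)" using G(3) kar_zero_mor[OF FG] Ge by simp
    then obtain m where m: "m \<in> hom D A K" "cmp D k m = gg" using univ[OF gg(1) gg(3)] gg by auto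
    define hh where "hh = cmp D (dag D k) gg"
    have hhA: "hh \<in> Arr D" "dm D hh = A" "cd D hh = K" unfolding hh_def using ty gg by auto
    have khh: "cmp D k hh = gg" unfolding hh_def using m cancel[of m] by simp
    have hha: "cmp D hh a = hh" unfolding hh_def using ty gg a by (simp add: assoc[symmetric])
    have "cmp D s' hh = cmp D (dag D k) (cmp D s (cmp D k hh))" unfolding s'_def using ty hhA
      by (simp add: assoc)
    then have s'hh: "cmp D s' hh = hh" using khh gg hh_def by simp
    have skhh: "cmp D (cmp D s k) hh = gg" using ty hhA khh gg by (simp add: assoc[symmetric])
    have HA: "((A,a),(K,s'),hh) \<in> Arr (Kar D)" using KA gg sa' k hhA hha s'hh by auto
    have ex: "((A,a),(K,s'),hh) \<in> hom (Kar D) (dm (Kar D) G) (dm (Kar D) ((K, s'), (X, s), cmp D s k))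
       \<and> cmp (Kar D) ((K, s'), (X, s), cmp D s k) ((A,a),(K,s'),hh) = G"
      using HA Ge skhh unfolding kar_hom by simp
    have un: "H = ((A,a),(K,s'),hh)"
      if H: "H \<in> hom (Kar D) (dm (Kar D) G) (dm (Kar D) ((K, s'), (X, s), cmp D s k))"
        "cmp (Kar D) ((K, s'), (X, s), cmp D s k) H = G" for H
    proof -
      obtain h' where He: "H = ((A,a),(K,s'),h')" using H(1) Ge unfolding kar_hom by (cases H) auto
      have h': "h' \<in> Arr D" "dm D h' = A" "cd D h' = K" "cmp D s' h' = h'"
        using H(1) He unfolding kar_hom by (auto simp: KA)
      have e: "cmp D (cmp D s k) h' = gg" using H(2) He Ge by simp
      have "cmp D k h' = cmp D k (cmp D s' h')" using h' by simp
      also have "\<dots> = cmp D (cmp D k s') h'" using ty h'(1-3) s'A by (simp add: assoc)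
      also have "\<dots> = gg" using ks' e by simp
      finally have "h' = hh" unfolding hh_def using cancel[of h'] h' by simp
      then show ?thesis using He by simp
    qed
    show ?thesis using ex un by blast
  qed
  have isk: "is_kernel (Kar D) ((X, s), (Y, t), f) ((K, s'), (X, s), cmp D s k)"
    unfolding is_kernel_def using F KkA FK0 kuniv by auto
  have "cmp D (dag D (cmp D s k)) (cmp D s k) = cmp D (cmp D (dag D k) s) (cmp D s k)"
    using ty by (simp add: dag_comp)
  also have "\<dots> = cmp D (dag D k) (cmp D s (cmp D s k))" using ty by (simp add: assoc)
  also have "\<dots> = s'" using sss s'_def by simp
  finally have "cmp D (dag D (cmp D s k)) (cmp D s k) = s'" .
  then have dmK: "dagger_mono (Kar D) ((K, s'), (X, s), cmp D s k)"
    unfolding dagger_mono_def using KkA by simp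
  show ?thesis using sa' ks' uniq KkA isk dmK unfolding K_def by simp
qed

lemma id_sa: "X \<in> Obj D \<Longrightarrow> sa_idem D X (idt D X)"
  using sa_iff id_r[of "idt D X"] by simp

lemma Iarr_A: "f \<in> Arr D \<Longrightarrow> Iarr D f \<in> Arr (Kar D)"
  unfolding Iarr_def Iobj_def using KA id_sa arr_obj id_r id_l by auto

lemma iker: assumes ker: "is_kernel D f k" shows "is_kernel (Kar D) (Iarr D f) (Iarr D k)"
proof -
  have f: "f \<in> Arr D" "k \<in> Arr D" "cd D k = dm D f" using ker unfolding is_kernel_def by auto
  define X where "X = dm D f"
  define Y where "Y = cd D f"
  define K where "K = dm D k"
  have O: "X \<in> Obj D" "Y \<in> Obj D" "K \<in> Obj D" using f arr_obj X_def Y_def K_def by auto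
  have fk0: "is_zero_mor D (cmp D f k)" using ker unfolding is_kernel_def by auto
  have univ: "\<And>g. g \<in> Arr D \<Longrightarrow> cd D g = X \<Longrightarrow> is_zero_mor D (cmp D f g) \<Longrightarrow>
        \<exists>!h. h \<in> hom D (dm D g) K \<and> cmp D k h = g"
    using ker unfolding is_kernel_def K_def X_def by auto
  have If: "Iarr D f = ((X, idt D X), (Y, idt D Y), f)" unfolding Iarr_def Iobj_def X_def Y_def ..
  have Ik: "Iarr D k = ((K, idt D K), (X, idt D X), k)" unfolding Iarr_def Iobj_def X_def K_def f(3) ..
  have IfA: "((X, idt D X), (Y, idt D Y), f) \<in> Arr (Kar D)" using Iarr_A[OF f(1)] If by simp
  have IkA: "((K, idt D K), (X, idt D X), k) \<in> Arr (Kar D)" using Iarr_A[OF f(2)] Ik by simp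
  have FK: "((K, idt D K), (Y, idt D Y), cmp D f k) \<in> Arr (Kar D)" using kar_comp[OF IkA IfA] .
  have FK0: "is_zero_mor (Kar D) ((K, idt D K), (Y, idt D Y), cmp D f k)"
    using kar_zero_mor[OF FK] fk0 by simp
  have kuniv: "\<exists>!H. H \<in> hom (Kar D) (dm (Kar D) G) (K, idt D K) \<and>
            cmp (Kar D) ((K, idt D K), (X, idt D X), k) H = G"
    if G: "G \<in> Arr (Kar D)" "cd (Kar D) G = (X, idt D X)"
       "is_zero_mor (Kar D) (cmp (Kar D) ((X, idt D X), (Y, idt D Y), f) G)" for G
  proof -
    obtain A a gg where Ge: "G = ((A,a),(X,idt D X),gg)" using G by (metis KA_cases K_simps(3))
    have GA: "((A,a),(X,idt D X),gg) \<in> Arr (Kar D)" using G Ge by simp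
    have gg: "gg \<in> Arr D" "dm D gg = A" "cd D gg = X" "cmp D gg a = gg"
      "A \<in> Obj D" "sa_idem D A a" using GA KA by auto
    have a: "a \<in> Arr D" "dm D a = A" "cd D a = A" using gg sa_iff by auto
    have FG: "((A,a),(Y,idt D Y),cmp D f gg) \<in> Arr (Kar D)" using kar_comp[OF GA IfA] .
    have "is_zero_mor D (cmp D f gg)" using G(3) kar_zero_mor[OF FG] Ge by simp
    then have eu: "\<exists>!h. h \<in> hom D A K \<and> cmp D k h = gg" using univ[OF gg(1) gg(3)] gg by auto
    then obtain m where m: "m \<in> hom D A K" "cmp D k m = gg" by auto
    have "cmp D k (cmp D m a) = cmp D (cmp D k m) a" using m a f K_def by (simp add: assoc)
    then have "cmp D k (cmp D m a) = gg" using m gg by simp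
    moreover have "cmp D m a \<in> hom D A K" using m a by simp
    ultimately have ma: "cmp D m a = m" using eu m by blast
    have im: "cmp D (idt D K) m = m" using m id_l[of m] by simp
    have HA: "((A,a),(K,idt D K),m) \<in> Arr (Kar D)" using KA gg m ma im O id_sa by auto
    have ex: "((A,a),(K,idt D K),m) \<in> hom (Kar D) (dm (Kar D) G) (K, idt D K)
       \<and> cmp (Kar D) ((K, idt D K), (X, idt D X), k) ((A,a),(K,idt D K),m) = G"
      using HA Ge m unfolding kar_hom by simp
    have un: "H = ((A,a),(K,idt D K),m)"
      if H: "H \<in> hom (Kar D) (dm (Kar D) G) (K, idt D K)"
        "cmp (Kar D) ((K, idt D K), (X, idt D X), k) H = G" for H
    proof -
      obtain h' where He: "H = ((A,a),(K,idt D K),h')" using H(1) Ge unfolding kar_hom by (cases H) auto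
      have h': "h' \<in> hom D A K" using H(1) He unfolding kar_hom by (auto simp: KA)
      have e: "cmp D k h' = gg" using H(2) He Ge by simp
      have "h' = m" using eu h' e m by blast
      then show ?thesis using He by simp
    qed
    show ?thesis using ex un by blast
  qed
  show ?thesis unfolding If Ik is_kernel_def using IfA IkA FK0 kuniv by auto
qed

end

theorem mainTheorem1:
  fixes D :: "('o, 'm) dcat"
  assumes "is_dagger_kernel_category D"
  shows "is_dagger_kernel_category (Kar D)
    \<and> (\<forall>z. is_zero_obj D z \<longrightarrow> is_zero_obj (Kar D) (z, idt D z))
    \<and> (\<forall>X s Y t f k. ((X, s), (Y, t), f) \<in> Arr (Kar D) \<and> is_kernel D f k \<and> dagger_mono D k \<longrightarrow>
         (let s' = cmp D (dag D k) (cmp D s k) in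
            sa_idem D (dm D k) s'
          \<and> cmp D k s' = cmp D s k
          \<and> (\<forall>u \<in> hom D (dm D k) (dm D k). cmp D k u = cmp D s k \<longrightarrow> u = s')
          \<and> ((dm D k, s'), (X, s), cmp D s k) \<in> Arr (Kar D)
          \<and> is_kernel (Kar D) ((X, s), (Y, t), f) ((dm D k, s'), (X, s), cmp D s k)
          \<and> dagger_mono (Kar D) ((dm D k, s'), (X, s), cmp D s k)))
    \<and> (\<forall>X \<in> Obj D. Iobj D X \<in> Obj (Kar D) \<and> idt (Kar D) (Iobj D X) = Iarr D (idt D X))
    \<and> (\<forall>f \<in> Arr D. Iarr D f \<in> hom (Kar D) (Iobj D (dm D f)) (Iobj D (cd D f)))
    \<and> (\<forall>f \<in> Arr D. \<forall>g \<in> Arr D. cd D f = dm D g \<longrightarrow>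
         Iarr D (cmp D g f) = cmp (Kar D) (Iarr D g) (Iarr D f))
    \<and> (\<forall>f \<in> Arr D. dag (Kar D) (Iarr D f) = Iarr D (dag D f))
    \<and> (\<forall>z. is_zero_obj D z \<longrightarrow> is_zero_obj (Kar D) (Iobj D z))
    \<and> (\<forall>f k. is_kernel D f k \<longrightarrow> is_kernel (Kar D) (Iarr D f) (Iarr D k))"
proof -
  interpret dkc D using assms by unfold_locales
  have c1: "is_dagger_kernel_category (Kar D)"
    unfolding is_dagger_kernel_category_def
  proof (intro conjI ballI)
    show "is_dagger_category (Kar D)" by (rule kar_dcat)
    show "\<exists>z. is_zero_obj (Kar D) z" using kz[OF z0] by blast
    fix x assume x: "x \<in> Arr (Kar D)"
    then obtain X s Y t f where xe: "x = ((X,s),(Y,t),f)" using KA_cases by blast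
    have "f \<in> Arr D" using x xe KA by auto
    then obtain k where k: "is_kernel D f k" "dagger_mono D k"
      using assms unfolding is_dagger_kernel_category_def by blast
    show "\<exists>k. is_kernel (Kar D) x k \<and> dagger_mono (Kar D) k"
      using kar_kernel[of X s Y t f k] x xe k by blast
  qed
  have c3: "\<forall>X s Y t f k. ((X, s), (Y, t), f) \<in> Arr (Kar D) \<and> is_kernel D f k \<and> dagger_mono D k \<longrightarrow>
         (let s' = cmp D (dag D k) (cmp D s k) in
            sa_idem D (dm D k) s'
          \<and> cmp D k s' = cmp D s k
          \<and> (\<forall>u \<in> hom D (dm D k) (dm D k). cmp D k u = cmp D s k \<longrightarrow> u = s')
          \<and> ((dm D k, s'), (X, s), cmp D s k) \<in> Arr (Kar D)
          \<and> is_kernel (Kar D) ((X, s), (Y, t), f) ((dm D k, s'), (X, s), cmp D s k)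
          \<and> dagger_mono (Kar D) ((dm D k, s'), (X, s), cmp D s k))"
    unfolding Let_def using kar_kernel by blast
  have c4: "\<forall>X \<in> Obj D. Iobj D X \<in> Obj (Kar D) \<and> idt (Kar D) (Iobj D X) = Iarr D (idt D X)"
    unfolding Iobj_def Iarr_def using id_sa by auto
  have c5: "\<forall>f \<in> Arr D. Iarr D f \<in> hom (Kar D) (Iobj D (dm D f)) (Iobj D (cd D f))"
    using Iarr_A unfolding kar_hom by (auto simp: Iarr_def)
  have c6: "\<forall>f \<in> Arr D. \<forall>g \<in> Arr D. cd D f = dm D g \<longrightarrow>
         Iarr D (cmp D g f) = cmp (Kar D) (Iarr D g) (Iarr D f)"
    by (auto simp: Iarr_def)
  have c7: "\<forall>f \<in> Arr D. dag (Kar D) (Iarr D f) = Iarr D (dag D f)"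
    by (auto simp: Iarr_def)
  show ?thesis using c1 c3 c4 c5 c6 c7 kz iker unfolding Iobj_def by blast
qed

end
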